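(* Let $K$ be a nonempty compact convex set in $\mathbb{R}^n$ and $u$ a unit vector. Then $$\Omega(\mathrm{s}_uK)\ge\Omega(K).$$ If $K$ has nonempty interior, equality holds if and only if $\mathrm{s}_uK=K$.
   Context: For a nonempty compact convex $K\subseteq\mathbb{R}^n$ and a unit vector $u$, the Steiner symmetrization $\mathrm{s}_uK$ is defined as follows: for each point $x$ of the orthogonal projection $\pi_uK$ of $K$ onto $u^\perp$, let $\ell_x(K)$ be the length of the segment $K\cap(x+\mathbb{R}u)$; then $\mathrm{s}_uK=\{x+tu:\ x\in\pi_uK,\ |t|\le \tfrac12\ell_x(K)\}$. $B$ is the closed unit ball centered at the origin, $V_n$ is $n$-dimensional volume. The layering function is $\Omega(K)=\int_0^\infty V_n(K\cap rB)\,e^{-r^2}\,dr$. *)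

theory Defs
  imports "HOL-Analysis.Analysis"
begin

definition perp_proj :: "'a::euclidean_space \<Rightarrow> 'a \<Rightarrow> 'a" where
  "perp_proj u x = x - (x \<bullet> u) *\<^sub>R u"

text \<open>Length of the chord K \<inter> (x + \<real>u), measured as the 1-dimensional Lebesgue
  measure of the parameter set (u is a unit vector).\<close>
definition chord_length :: "'a::euclidean_space \<Rightarrow> 'a set \<Rightarrow> 'a \<Rightarrow> real" where
  "chord_length u K x = measure lborel {t::real. x + t *\<^sub>R u \<in> K}"

definition steiner :: "'a::euclidean_space \<Rightarrow> 'a set \<Rightarrow> 'a set" where
  "steiner u K = {x + t *\<^sub>R u | x t. x \<in> perp_proj u ` K \<and> \<bar>t\<bar> \<le> chord_length u K x / 2}"

definition layering :: "'a::euclidean_space set \<Rightarrow> real" where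
  "layering K = (\<integral>r\<in>{0..}. measure lebesgue (K \<inter> cball 0 r) * exp (- (r\<^sup>2)) \<partial>lborel)"

end

theory Submission
  imports Defs "HOL-Probability.Distributions"
begin

lemma L0:
  fixes b0 :: "'a::euclidean_space" and \<Phi> :: "'a \<Rightarrow> ennreal"
  assumes b0: "b0 \<in> Basis" and [measurable]: "\<Phi> \<in> borel_measurable borel"
  shows "(\<integral>\<^sup>+z. \<Phi> z \<partial>lborel) =
    (\<integral>\<^sup>+x. (\<integral>\<^sup>+s. \<Phi> ((\<Sum>b\<in>Basis-{b0}. x b *\<^sub>R b) + s *\<^sub>R b0) \<partial>lborel) \<partial>(\<Pi>\<^sub>M b\<in>Basis-{b0}. lborel))"
proof -
  interpret product_sigma_finite "\<lambda>_::'a. lborel::real measure" by standard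
  have "(\<integral>\<^sup>+z. \<Phi> z \<partial>lborel) = (\<integral>\<^sup>+f. \<Phi> (\<Sum>b\<in>Basis. f b *\<^sub>R b) \<partial>(\<Pi>\<^sub>M b\<in>Basis. lborel))"
    by (subst lborel_eq) (simp add: nn_integral_distr)
  also have "Basis = insert b0 (Basis - {b0})" using b0 by auto
  also have "(\<integral>\<^sup>+f. \<Phi> (\<Sum>b\<in>insert b0 (Basis - {b0}). f b *\<^sub>R b) \<partial>(\<Pi>\<^sub>M b\<in>insert b0 (Basis - {b0}). lborel))
     = (\<integral>\<^sup>+x. (\<integral>\<^sup>+s. \<Phi> (\<Sum>b\<in>insert b0 (Basis - {b0}). (x(b0:=s)) b *\<^sub>R b) \<partial>lborel) \<partial>(\<Pi>\<^sub>M b\<in>Basis-{b0}. lborel))"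
    by (rule product_nn_integral_insert) auto
  also have "\<dots> = (\<integral>\<^sup>+x. (\<integral>\<^sup>+s. \<Phi> ((\<Sum>b\<in>Basis-{b0}. x b *\<^sub>R b) + s *\<^sub>R b0) \<partial>lborel) \<partial>(\<Pi>\<^sub>M b\<in>Basis-{b0}. lborel))"
  proof -
    have "(\<Sum>b\<in>insert b0 (Basis - {b0}). (x(b0:=s)) b *\<^sub>R b) = (\<Sum>b\<in>Basis-{b0}. x b *\<^sub>R b) + s *\<^sub>R b0" for x s
      by (subst sum.insert) (auto simp: add.commute intro!: sum.cong)
    then show ?thesis by simp
  qed
  finally show ?thesis .
qed

lemma nn_integral_lborel_transl:
  fixes \<Phi> :: "'a::euclidean_space \<Rightarrow> ennreal"
  assumes [measurable]: "\<Phi> \<in> borel_measurable borel"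
  shows "(\<integral>\<^sup>+z. \<Phi> (v + z) \<partial>lborel) = (\<integral>\<^sup>+z. \<Phi> z \<partial>lborel)"
  by (subst (2) lborel_affine[of 1 v]) (simp_all add: nn_integral_density nn_integral_distr)

lemma L1:
  fixes b0 v :: "'a::euclidean_space" and \<phi> :: "'a \<Rightarrow> ennreal"
  assumes b0: "b0 \<in> Basis" and v: "v \<bullet> b0 = 0" and [measurable]: "\<phi> \<in> borel_measurable borel"
  shows "(\<integral>\<^sup>+x. \<phi> ((\<Sum>b\<in>Basis-{b0}. x b *\<^sub>R b) + v) \<partial>(\<Pi>\<^sub>M b\<in>Basis-{b0}. lborel)) =
         (\<integral>\<^sup>+x. \<phi> (\<Sum>b\<in>Basis-{b0}. x b *\<^sub>R b) \<partial>(\<Pi>\<^sub>M b\<in>Basis-{b0}. lborel))"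
proof -
  define \<Phi> where "\<Phi> z = \<phi> (z - (z \<bullet> b0) *\<^sub>R b0) * indicator {0..1::real} (z \<bullet> b0)" for z
  have [measurable]: "\<Phi> \<in> borel_measurable borel" unfolding \<Phi>_def by measurable
  have P0: "(\<Sum>b\<in>Basis-{b0}. x b *\<^sub>R b) \<bullet> b0 = 0" for x :: "'a \<Rightarrow> real"
    using b0 by (simp add: inner_sum_left inner_Basis)
  have eq: "(\<integral>\<^sup>+z. \<Phi> (w + z) \<partial>lborel) = (\<integral>\<^sup>+x. \<phi> ((\<Sum>b\<in>Basis-{b0}. x b *\<^sub>R b) + w) \<partial>(\<Pi>\<^sub>M b\<in>Basis-{b0}. lborel))"
    if w: "w \<bullet> b0 = 0" for w
  proof -
    have "(\<integral>\<^sup>+z. \<Phi> (w + z) \<partial>lborel) = (\<integral>\<^sup>+x. (\<integral>\<^sup>+s. \<Phi> (w + ((\<Sum>b\<in>Basis-{b0}. x b *\<^sub>R b) + s *\<^sub>R b0)) \<partial>lborel) \<partial>(\<Pi>\<^sub>M b\<in>Basis-{b0}. lborel))"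
      by (rule L0[OF b0]) measurable
    also have "\<dots> = (\<integral>\<^sup>+x. (\<integral>\<^sup>+s. \<phi> ((\<Sum>b\<in>Basis-{b0}. x b *\<^sub>R b) + w) * indicator {0..1::real} s \<partial>lborel) \<partial>(\<Pi>\<^sub>M b\<in>Basis-{b0}. lborel))"
    proof -
      have "\<Phi> (w + ((\<Sum>b\<in>Basis-{b0}. x b *\<^sub>R b) + s *\<^sub>R b0)) = \<phi> ((\<Sum>b\<in>Basis-{b0}. x b *\<^sub>R b) + w) * indicator {0..1} s" for x s
        using b0 w P0[of x] by (simp add: \<Phi>_def inner_add_left algebra_simps)
      then show ?thesis by simp
    qed
    also have "\<dots> = (\<integral>\<^sup>+x. \<phi> ((\<Sum>b\<in>Basis-{b0}. x b *\<^sub>R b) + w) \<partial>(\<Pi>\<^sub>M b\<in>Basis-{b0}. lborel))"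
      by (simp add: nn_integral_cmult_indicator)
    finally show ?thesis .
  qed
  have "(\<integral>\<^sup>+z. \<Phi> (v + z) \<partial>lborel) = (\<integral>\<^sup>+z. \<Phi> (0 + z) \<partial>lborel)"
    by (simp add: nn_integral_lborel_transl)
  then show ?thesis using eq[OF v] eq[of 0] by simp
qed

lemma L2:
  fixes b0 u :: "'a::euclidean_space" and \<Phi> :: "'a \<Rightarrow> ennreal"
  assumes b0: "b0 \<in> Basis" and c: "u \<bullet> b0 \<noteq> 0" and [measurable]: "\<Phi> \<in> borel_measurable borel"
  shows "(\<integral>\<^sup>+z. \<Phi> z \<partial>lborel) = ennreal \<bar>u \<bullet> b0\<bar> *
    (\<integral>\<^sup>+x. (\<integral>\<^sup>+y. \<Phi> ((\<Sum>b\<in>Basis-{b0}. x b *\<^sub>R b) + y *\<^sub>R u) \<partial>lborel) \<partial>(\<Pi>\<^sub>M b\<in>Basis-{b0}. lborel))"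
proof -
  define c where "c = u \<bullet> b0"
  define M where "M = (\<Pi>\<^sub>M b\<in>Basis-{b0}. (lborel::real measure))"
  define P where "P x = (\<Sum>b\<in>Basis-{b0}. x b *\<^sub>R b)" for x :: "'a \<Rightarrow> real"
  interpret product_sigma_finite "\<lambda>_::'a. lborel::real measure" by standard
  have sfM: "sigma_finite_measure M" unfolding M_def by (rule sigma_finite) auto
  interpret pair_sigma_finite M "lborel::real measure"
    by (simp add: sfM lborel.sigma_finite_measure_axioms pair_sigma_finite.intro)
  have [measurable]: "P \<in> borel_measurable M"
    unfolding P_def M_def by measurable
  have "(\<integral>\<^sup>+x. (\<integral>\<^sup>+y. \<Phi> (P x + y *\<^sub>R u) \<partial>lborel) \<partial>M) = (\<integral>\<^sup>+y. (\<integral>\<^sup>+x. \<Phi> (P x + y *\<^sub>R u) \<partial>M) \<partial>lborel)"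
    by (rule Fubini'[symmetric]) measurable
  also have "\<dots> = (\<integral>\<^sup>+y. (\<integral>\<^sup>+x. \<Phi> (P x + (c * y) *\<^sub>R b0) \<partial>M) \<partial>lborel)"
  proof (rule nn_integral_cong)
    fix y :: real
    have vb: "(y *\<^sub>R (u - c *\<^sub>R b0)) \<bullet> b0 = 0" using b0 by (simp add: c_def inner_diff_left)
    have "(\<integral>\<^sup>+x. \<Phi> (P x + y *\<^sub>R u) \<partial>M) = (\<integral>\<^sup>+x. (\<lambda>z. \<Phi> (z + (c * y) *\<^sub>R b0)) (P x + y *\<^sub>R (u - c *\<^sub>R b0)) \<partial>M)"
      by (simp add: algebra_simps)
    also have "\<dots> = (\<integral>\<^sup>+x. (\<lambda>z. \<Phi> (z + (c * y) *\<^sub>R b0)) (P x) \<partial>M)"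
      unfolding M_def P_def by (rule L1[OF b0 vb]) measurable
    finally show "(\<integral>\<^sup>+x. \<Phi> (P x + y *\<^sub>R u) \<partial>M) = (\<integral>\<^sup>+x. \<Phi> (P x + (c * y) *\<^sub>R b0) \<partial>M)" by simp
  qed
  also have "\<dots> = (\<integral>\<^sup>+x. (\<integral>\<^sup>+y. \<Phi> (P x + (c * y) *\<^sub>R b0) \<partial>lborel) \<partial>M)"
    by (rule Fubini') measurable
  finally have 1: "(\<integral>\<^sup>+x. (\<integral>\<^sup>+y. \<Phi> (P x + y *\<^sub>R u) \<partial>lborel) \<partial>M) = \<dots>" .
  have 2: "(\<integral>\<^sup>+s. \<Phi> (P x + s *\<^sub>R b0) \<partial>lborel) = ennreal \<bar>c\<bar> * (\<integral>\<^sup>+y. \<Phi> (P x + (c * y) *\<^sub>R b0) \<partial>lborel)" for x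
    using nn_integral_real_affine[of "\<lambda>s. \<Phi> (P x + s *\<^sub>R b0)" c 0] c unfolding c_def by simp
  have "(\<integral>\<^sup>+z. \<Phi> z \<partial>lborel) = (\<integral>\<^sup>+x. (\<integral>\<^sup>+s. \<Phi> (P x + s *\<^sub>R b0) \<partial>lborel) \<partial>M)"
    unfolding M_def P_def by (rule L0[OF b0]) measurable
  also have "\<dots> = (\<integral>\<^sup>+x. ennreal \<bar>c\<bar> * (\<integral>\<^sup>+y. \<Phi> (P x + (c * y) *\<^sub>R b0) \<partial>lborel) \<partial>M)"
    by (simp add: 2)
  also have "\<dots> = ennreal \<bar>c\<bar> * (\<integral>\<^sup>+x. (\<integral>\<^sup>+y. \<Phi> (P x + (c * y) *\<^sub>R b0) \<partial>lborel) \<partial>M)"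
    by (rule nn_integral_cmult) measurable
  finally show ?thesis using 1 unfolding c_def M_def P_def by simp
qed

lemma uu: "norm (u::'a::real_inner) = 1 \<Longrightarrow> u \<bullet> u = 1"
  by (simp add: norm_eq_1)

lemma pp_inner: "norm u = 1 \<Longrightarrow> perp_proj u z \<bullet> u = 0"
  by (simp add: perp_proj_def inner_diff_left uu)

lemma pp_decomp: "z = perp_proj u z + (z \<bullet> u) *\<^sub>R u"
  by (simp add: perp_proj_def)

lemma pp_line: "norm u = 1 \<Longrightarrow> w \<bullet> u = 0 \<Longrightarrow> perp_proj u (w + t *\<^sub>R u) = w"
  by (simp add: perp_proj_def inner_add_left uu)

lemma inner_line: "norm u = 1 \<Longrightarrow> w \<bullet> u = 0 \<Longrightarrow> (w + t *\<^sub>R u) \<bullet> u = t"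
  using uu[of u] by (simp add: inner_add_left)

lemma norm_line: "norm u = 1 \<Longrightarrow> w \<bullet> u = 0 \<Longrightarrow> (norm (w + t *\<^sub>R u))\<^sup>2 = (norm w)\<^sup>2 + t\<^sup>2"
  using uu[of u] unfolding power2_norm_eq_inner by (simp add: inner_add_left inner_add_right inner_commute power2_eq_square)

lemma steiner_mem:
  assumes u: "norm u = 1" and w: "w \<bullet> u = 0"
  shows "w + t *\<^sub>R u \<in> steiner u K \<longleftrightarrow> w \<in> perp_proj u ` K \<and> \<bar>t\<bar> \<le> chord_length u K w / 2"
proof
  assume "w + t *\<^sub>R u \<in> steiner u K"
  then obtain x t' where x: "w + t *\<^sub>R u = x + t' *\<^sub>R u" "x \<in> perp_proj u ` K" "\<bar>t'\<bar> \<le> chord_length u K x / 2"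
    unfolding steiner_def by blast
  have xu: "x \<bullet> u = 0" using x(2) u pp_inner by auto
  have "perp_proj u (w + t *\<^sub>R u) = perp_proj u (x + t' *\<^sub>R u)" using x(1) by simp
  then have "w = x" using pp_line[OF u w] pp_line[OF u xu] by simp
  moreover have "t = t'" using x(1) inner_line[OF u w, of t] inner_line[OF u xu, of t'] by simp
  ultimately show "w \<in> perp_proj u ` K \<and> \<bar>t\<bar> \<le> chord_length u K w / 2" using x by simp
next
  assume "w \<in> perp_proj u ` K \<and> \<bar>t\<bar> \<le> chord_length u K w / 2"
  then show "w + t *\<^sub>R u \<in> steiner u K" unfolding steiner_def by blast
qed

lemma chord_empty:
  assumes u: "norm u = 1" and w: "w \<bullet> u = 0" and "w \<notin> perp_proj u ` K"
  shows "{t. w + t *\<^sub>R u \<in> K} = {}"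
  using assms pp_line[OF u w] by (metis (no_types, lifting) empty_iff equalityI image_eqI mem_Collect_eq subsetI)

lemma chord_interval:
  fixes K :: "'a::euclidean_space set"
  assumes K: "compact K" "convex K" and u: "norm u = 1" and w: "w \<in> perp_proj u ` K"
  obtains a b where "a \<le> b" "{t. w + t *\<^sub>R u \<in> K} = {a..b}" "chord_length u K w = b - a"
proof -
  define C where "C = {t. w + t *\<^sub>R u \<in> K}"
  have "closed C"
  proof -
    have "C = (\<lambda>t::real. w + t *\<^sub>R u) -` K" unfolding C_def by auto
    then show ?thesis using compact_imp_closed[OF K(1)]
      by (simp add: continuous_closed_vimage continuous_intros)
  qed
  moreover have "bounded C"
  proof -
    obtain R where R: "\<And>x. x \<in> K \<Longrightarrow> norm x \<le> R" using compact_imp_bounded[OF K(1)] bounded_iff by blast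
    have "\<bar>t\<bar> \<le> R + norm w" if "t \<in> C" for t
    proof -
      have "\<bar>t\<bar> = norm (t *\<^sub>R u)" using u by simp
      also have "\<dots> \<le> norm (w + t *\<^sub>R u) + norm w" by (metis add_diff_cancel_left' norm_triangle_ineq4 add.commute)
      also have "\<dots> \<le> R + norm w" using R that unfolding C_def by auto
      finally show ?thesis .
    qed
    then show ?thesis unfolding bounded_iff by (metis real_norm_def)
  qed
  moreover have "convex C"
    unfolding C_def convex_def
  proof (intro allI impI ballI)
    fix x y :: real and a b :: real
    assume xy: "x \<in> {t. w + t *\<^sub>R u \<in> K}" "y \<in> {t. w + t *\<^sub>R u \<in> K}" and ab: "0 \<le> a" "0 \<le> b" "a + b = 1"
    have "a *\<^sub>R (w + x *\<^sub>R u) + b *\<^sub>R (w + y *\<^sub>R u) \<in> K"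
      using K(2) xy ab unfolding convex_def by auto
    moreover have "a *\<^sub>R (w + x *\<^sub>R u) + b *\<^sub>R (w + y *\<^sub>R u) = w + (a * x + b * y) *\<^sub>R u"
      using ab by (simp add: algebra_simps flip: scaleR_add_left)
    ultimately show "a *\<^sub>R x + b *\<^sub>R y \<in> {t. w + t *\<^sub>R u \<in> K}" by simp
  qed
  ultimately obtain a b where ab: "C = {a..b}"
    using connected_compact_interval_1 convex_connected compact_eq_bounded_closed by metis
  obtain k where k: "k \<in> K" "w = perp_proj u k" using w by auto
  have "w + (k \<bullet> u) *\<^sub>R u = k" using k pp_decomp[of k u] by simp
  then have "k \<bullet> u \<in> C" using k unfolding C_def by simp
  then have "a \<le> b" using ab by simp
  moreover have "chord_length u K w = b - a"
    using ab \<open>a \<le> b\<close> unfolding chord_length_def C_def by simp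
  ultimately show ?thesis using that ab C_def by blast
qed

lemma steiner_image:
  fixes K :: "'a::euclidean_space set"
  assumes K: "compact K" "convex K" and u: "norm u = 1"
  shows "steiner u K = (\<lambda>(k1,k2,\<theta>). perp_proj u k1 + (\<theta> * ((k2 \<bullet> u - k1 \<bullet> u) / 2)) *\<^sub>R u) `
     ((K \<times> (K \<times> {-1..1::real})) \<inter> {p. perp_proj u (fst p) = perp_proj u (fst (snd p))})"
  (is "_ = ?f ` ?T")
proof
  show "steiner u K \<subseteq> ?f ` ?T"
  proof
    fix p assume p: "p \<in> steiner u K"
    then obtain w t where wt: "p = w + t *\<^sub>R u" "w \<in> perp_proj u ` K" "\<bar>t\<bar> \<le> chord_length u K w / 2"
      unfolding steiner_def by blast
    have wu: "w \<bullet> u = 0" using wt(2) pp_inner[OF u] by auto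
    obtain a b where ab: "a \<le> b" "{t. w + t *\<^sub>R u \<in> K} = {a..b}" "chord_length u K w = b - a"
      using chord_interval[OF K u wt(2)] by blast
    define k1 where "k1 = w + a *\<^sub>R u"
    define k2 where "k2 = w + b *\<^sub>R u"
    define \<theta> where "\<theta> = (if b = a then 0 else 2 * t / (b - a))"
    have "k1 \<in> K" "k2 \<in> K" using ab unfolding k1_def k2_def by auto
    moreover have "perp_proj u k1 = w" "perp_proj u k2 = w"
      unfolding k1_def k2_def using pp_line[OF u wu] by auto
    moreover have "\<theta> \<in> {-1..1}"
      using wt(3) ab unfolding \<theta>_def by (auto simp: abs_le_iff field_simps)
    moreover have "p = ?f (k1, k2, \<theta>)"
    proof -
      have "k2 \<bullet> u - k1 \<bullet> u = b - a" unfolding k1_def k2_def using inner_line[OF u wu] by simp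
      moreover have "\<theta> * ((b - a) / 2) = t" using wt(3) ab unfolding \<theta>_def by auto
      ultimately show ?thesis using wt(1) \<open>perp_proj u k1 = w\<close> by simp
    qed
    ultimately have "(k1, k2, \<theta>) \<in> ?T" by simp
    then show "p \<in> ?f ` ?T" using \<open>p = ?f (k1, k2, \<theta>)\<close> by (rule rev_image_eqI)
  qed
next
  show "?f ` ?T \<subseteq> steiner u K"
  proof (rule image_subsetI)
    fix x assume "x \<in> ?T"
    obtain k1 k2 \<theta> where x: "x = (k1, k2, \<theta>)" by (cases x)
    have k: "k1 \<in> K" "k2 \<in> K" "\<theta> \<in> {-1..1::real}" "perp_proj u k1 = perp_proj u k2"
      using \<open>x \<in> ?T\<close> unfolding x by simp_all
    define w where "w = perp_proj u k1"
    have wK: "w \<in> perp_proj u ` K" using k unfolding w_def by auto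
    have wu: "w \<bullet> u = 0" unfolding w_def using pp_inner[OF u] by auto
    obtain a b where ab: "a \<le> b" "{t. w + t *\<^sub>R u \<in> K} = {a..b}" "chord_length u K w = b - a"
      using chord_interval[OF K u wK] by blast
    have "w + (k1 \<bullet> u) *\<^sub>R u = k1" "w + (k2 \<bullet> u) *\<^sub>R u = k2"
      using pp_decomp[of k1 u] pp_decomp[of k2 u] k(4) unfolding w_def by auto
    then have "k1 \<bullet> u \<in> {a..b}" "k2 \<bullet> u \<in> {a..b}" using k ab(2) by (metis mem_Collect_eq)+
    then have d: "\<bar>(k2 \<bullet> u - k1 \<bullet> u) / 2\<bar> \<le> (b - a) / 2" by auto
    have th: "\<bar>\<theta>\<bar> \<le> 1" using k(3) by auto
    have "\<bar>\<theta> * ((k2 \<bullet> u - k1 \<bullet> u) / 2)\<bar> = \<bar>\<theta>\<bar> * \<bar>(k2 \<bullet> u - k1 \<bullet> u) / 2\<bar>" by (rule abs_mult)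
    also have "\<dots> \<le> 1 * ((b - a) / 2)" by (rule mult_mono[OF th d]) auto
    finally have "\<bar>\<theta> * ((k2 \<bullet> u - k1 \<bullet> u) / 2)\<bar> \<le> (b - a) / 2" by simp
    then show "?f x \<in> steiner u K"
      using steiner_mem[OF u wu] wK ab(3) unfolding w_def x by simp
  qed
qed

lemma steiner_compact:
  fixes K :: "'a::euclidean_space set"
  assumes K: "compact K" "convex K" and u: "norm u = 1"
  shows "compact (steiner u K)"
proof -
  have cpp: "continuous_on UNIV (perp_proj u)" unfolding perp_proj_def[abs_def] by (intro continuous_intros)
  have "closed {p::'a \<times> 'a \<times> real. perp_proj u (fst p) = perp_proj u (fst (snd p))}"
    unfolding perp_proj_def by (intro closed_Collect_eq continuous_intros)
  then have "compact ((K \<times> (K \<times> {-1..1::real})) \<inter> {p. perp_proj u (fst p) = perp_proj u (fst (snd p))})"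
    using K(1) by (intro compact_Int_closed compact_Times) auto
  moreover have cf: "continuous_on UNIV (\<lambda>(k1::'a,k2::'a,\<theta>::real). perp_proj u k1 + (\<theta> * ((k2 \<bullet> u - k1 \<bullet> u) / 2)) *\<^sub>R u)"
    unfolding perp_proj_def case_prod_unfold by (intro continuous_intros) simp
  ultimately show ?thesis unfolding steiner_image[OF K u]
    by (intro compact_continuous_image continuous_on_subset[OF cf]) auto
qed

lemma L3:
  fixes b0 u :: "'a::euclidean_space"
  assumes b0: "b0 \<in> Basis" and c: "u \<bullet> b0 \<noteq> 0" and A[measurable]: "A \<in> sets borel"
  shows "emeasure lborel A = ennreal \<bar>u \<bullet> b0\<bar> *
    (\<integral>\<^sup>+x. emeasure lborel {y. (\<Sum>b\<in>Basis-{b0}. x b *\<^sub>R b) + y *\<^sub>R u \<in> A} \<partial>(\<Pi>\<^sub>M b\<in>Basis-{b0}. lborel))"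
proof -
  have "emeasure lborel A = (\<integral>\<^sup>+z. indicator A z \<partial>lborel)" by simp
  also have "\<dots> = ennreal \<bar>u \<bullet> b0\<bar> *
    (\<integral>\<^sup>+x. (\<integral>\<^sup>+y. indicator A ((\<Sum>b\<in>Basis-{b0}. x b *\<^sub>R b) + y *\<^sub>R u) \<partial>lborel) \<partial>(\<Pi>\<^sub>M b\<in>Basis-{b0}. lborel))"
    by (rule L2[OF b0 c]) measurable
  also have "\<dots> = ennreal \<bar>u \<bullet> b0\<bar> *
    (\<integral>\<^sup>+x. emeasure lborel {y. (\<Sum>b\<in>Basis-{b0}. x b *\<^sub>R b) + y *\<^sub>R u \<in> A} \<partial>(\<Pi>\<^sub>M b\<in>Basis-{b0}. lborel))"
  proof -
    have "(\<integral>\<^sup>+y. indicator A (p + y *\<^sub>R u) \<partial>lborel) = emeasure lborel {y. p + y *\<^sub>R u \<in> A}" for p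
    proof -
      have [measurable]: "{y. p + y *\<^sub>R u \<in> A} \<in> sets lborel" by measurable
      have "(\<integral>\<^sup>+y. indicator A (p + y *\<^sub>R u) \<partial>lborel) = (\<integral>\<^sup>+y. indicator {y. p + y *\<^sub>R u \<in> A} y \<partial>lborel)"
        by (simp add: indicator_def)
      then show ?thesis by simp
    qed
    then show ?thesis by simp
  qed
  finally show ?thesis .
qed

lemma L4:
  assumes u: "norm u = 1" and A[measurable]: "A \<in> sets borel"
  shows "emeasure lborel {y. z + y *\<^sub>R u \<in> A} = emeasure lborel {t. perp_proj u z + t *\<^sub>R u \<in> A}"
proof -
  define s where "s = z \<bullet> u"
  have [measurable]: "{t. perp_proj u z + t *\<^sub>R u \<in> A} \<in> sets borel" by measurable
  have eq: "{y. z + y *\<^sub>R u \<in> A} = (+) s -` {t. perp_proj u z + t *\<^sub>R u \<in> A}"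
  proof -
    have "z + y *\<^sub>R u = perp_proj u z + (s + y) *\<^sub>R u" for y
      unfolding s_def perp_proj_def by (simp add: algebra_simps)
    then show ?thesis by auto
  qed
  have "emeasure lborel {t. perp_proj u z + t *\<^sub>R u \<in> A} = emeasure (distr lborel borel ((+) s)) {t. perp_proj u z + t *\<^sub>R u \<in> A}"
    by (simp add: lborel_distr_plus)
  also have "\<dots> = emeasure lborel {y. z + y *\<^sub>R u \<in> A}"
    by (subst emeasure_distr) (auto simp: eq)
  finally show ?thesis ..
qed

lemma Icc_em: "emeasure lborel {l..h::real} = ennreal (h - l)"
  by (cases "l \<le> h") (auto simp: ennreal_neg)

lemma cball_line:
  assumes u: "norm u = 1" and w: "w \<bullet> u = 0"
  shows "{t. w + t *\<^sub>R u \<in> cball 0 r} =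
    (if norm w \<le> r then {- sqrt (r\<^sup>2 - (norm w)\<^sup>2) .. sqrt (r\<^sup>2 - (norm w)\<^sup>2)} else {})"
proof -
  have "w + t *\<^sub>R u \<in> cball 0 r \<longleftrightarrow> norm w \<le> r \<and> t\<^sup>2 \<le> r\<^sup>2 - (norm w)\<^sup>2" for t
  proof -
    have "w + t *\<^sub>R u \<in> cball 0 r \<longleftrightarrow> norm (w + t *\<^sub>R u) \<le> r" by simp
    also have "\<dots> \<longleftrightarrow> 0 \<le> r \<and> (norm (w + t *\<^sub>R u))\<^sup>2 \<le> r\<^sup>2"
      proof -
      have gen: "\<And>x r::real. 0 \<le> x \<Longrightarrow> x \<le> r \<longleftrightarrow> 0 \<le> r \<and> x\<^sup>2 \<le> r\<^sup>2" by auto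
      show ?thesis by (rule gen) simp
    qed
    also have "\<dots> \<longleftrightarrow> 0 \<le> r \<and> (norm w)\<^sup>2 + t\<^sup>2 \<le> r\<^sup>2" using norm_line[OF u w] by simp
    also have "\<dots> \<longleftrightarrow> norm w \<le> r \<and> t\<^sup>2 \<le> r\<^sup>2 - (norm w)\<^sup>2"
    proof -
      have "0 \<le> norm w" by simp
      moreover have "0 \<le> t\<^sup>2" by simp
      ultimately show ?thesis using power2_le_imp_le[of "norm w" r] by (smt (verit))
    qed
    finally show ?thesis .
  qed
  moreover have "t\<^sup>2 \<le> X \<longleftrightarrow> t \<in> {- sqrt X .. sqrt X}" if "0 \<le> X" for t X :: real
  proof -
    have "t\<^sup>2 \<le> X \<longleftrightarrow> \<bar>t\<bar> \<le> sqrt X" using sqrt_ge_absD real_le_rsqrt[of "\<bar>t\<bar>" X] by auto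
    then show ?thesis by auto
  qed
  moreover have "norm w \<le> r \<Longrightarrow> 0 \<le> r\<^sup>2 - (norm w)\<^sup>2"
    by (simp add: power_mono)
  ultimately show ?thesis by auto
qed

lemma R1: fixes a b \<rho> l :: real assumes "a \<le> b" "0 \<le> \<rho>" "l = b - a"
  shows "min b \<rho> - max a (-\<rho>) \<le> min (l/2) \<rho> - max (-(l/2)) (-\<rho>)"
  using assms by (auto simp: min_def max_def)
lemma R2: fixes a b \<rho> m \<delta> l :: real assumes "a \<le> b" "0 \<le> \<rho>" "0 < \<delta>" "a \<le> m - \<delta>/2" "m + \<delta>/2 \<le> b" "l = b - a"
  and H: "\<And>t. m - \<delta>/2 \<le> t \<Longrightarrow> t \<le> m + \<delta>/2 \<Longrightarrow> l/2 < \<bar>t\<bar>"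
  and r: "\<bar>m\<bar> - \<delta>/4 \<le> \<rho>" "\<rho> \<le> \<bar>m\<bar> + \<delta>/4"
  shows "max 0 (min b \<rho> - max a (-\<rho>)) + \<delta>/4 \<le> min (l/2) \<rho> - max (-(l/2)) (-\<rho>)"
proof -
  have h1: "l/2 < \<bar>m - \<delta>/2\<bar>" "l/2 < \<bar>m + \<delta>/2\<bar>" using H assms by auto
  have c: "m - \<delta>/2 > l/2 \<or> m + \<delta>/2 < -(l/2)"
  proof (rule ccontr)
    assume "\<not> ?thesis"
    then have "m - \<delta>/2 \<le> -(l/2)" "-(l/2) \<le> m + \<delta>/2" using h1 assms(1,6) by (smt (verit))+
    then have "l/2 < \<bar>-(l/2)\<bar>" using H by blast
    then show False using assms by auto
  qed
  have lb: "\<delta> \<le> l" using assms(4,5,6) by linarith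
  show ?thesis using c
  proof
    assume c1: "m - \<delta>/2 > l/2"
    then have am: "\<bar>m\<bar> = m" using lb assms(3) by auto
    have rl: "l/2 \<le> \<rho>" using r(1) c1 am assms(3) by linarith
    have R: "min (l/2) \<rho> - max (-(l/2)) (-\<rho>) = l" using rl by auto
    have "min b \<rho> - max a (-\<rho>) \<le> \<rho> - a" by auto
    also have "\<dots> \<le> l - \<delta>/4" using r(2) am assms(5,6) by linarith
    finally show ?thesis unfolding R using lb assms(3) by auto
  next
    assume c2: "m + \<delta>/2 < -(l/2)"
    then have am: "\<bar>m\<bar> = - m" using lb assms(3) by auto
    have rl: "l/2 \<le> \<rho>" using r(1) c2 am assms(3) by linarith
    have R: "min (l/2) \<rho> - max (-(l/2)) (-\<rho>) = l" using rl by auto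
    have "min b \<rho> - max a (-\<rho>) \<le> b + \<rho>" by auto
    also have "\<dots> \<le> l - \<delta>/4" using r(2) am assms(4,6) by linarith
    finally show ?thesis unfolding R using lb assms(3) by auto
  qed
qed


lemma ennreal_max0: "ennreal x = ennreal (max 0 x)"
  by (cases "0 \<le> x") (auto simp: ennreal_neg max_def)

lemma steiner_chord:
  assumes u: "norm u = 1" and w: "w \<bullet> u = 0" and wK: "w \<in> perp_proj u ` K"
  shows "{t. w + t *\<^sub>R u \<in> steiner u K} = {-(chord_length u K w / 2) .. chord_length u K w / 2}"
  using steiner_mem[OF u w] wK by (auto simp: abs_le_iff)

lemma steiner_chord_empty:
  assumes u: "norm u = 1" and w: "w \<bullet> u = 0" and wK: "w \<notin> perp_proj u ` K"
  shows "{t. w + t *\<^sub>R u \<in> steiner u K} = {}"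
  using steiner_mem[OF u w] wK by auto

lemma line_Int: "{t. w + t *\<^sub>R u \<in> A \<inter> B} = {t. w + t *\<^sub>R u \<in> A} \<inter> {t. w + t *\<^sub>R u \<in> B}"
  by auto

lemma pw_le_perp:
  fixes K :: "'a::euclidean_space set"
  assumes K: "compact K" "convex K" and u: "norm u = 1" and w: "w \<bullet> u = 0"
  shows "emeasure lborel {t. w + t *\<^sub>R u \<in> K \<inter> cball 0 r} \<le> emeasure lborel {t. w + t *\<^sub>R u \<in> steiner u K \<inter> cball 0 r}"
proof (cases "w \<in> perp_proj u ` K \<and> norm w \<le> r")
  case False
  then have "{t. w + t *\<^sub>R u \<in> K \<inter> cball 0 r} = {}"
    using chord_empty[OF u w, of K] cball_line[OF u w, of r] unfolding line_Int by (auto split: if_splits)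
  then show ?thesis by (simp only: emeasure_empty zero_le)
next
  case True
  then have wK: "w \<in> perp_proj u ` K" and wr: "norm w \<le> r" by auto
  obtain a b where ab: "a \<le> b" "{t. w + t *\<^sub>R u \<in> K} = {a..b}" "chord_length u K w = b - a"
    using chord_interval[OF K u wK] by blast
  define \<rho> where "\<rho> = sqrt (r\<^sup>2 - (norm w)\<^sup>2)"
  have \<rho>0: "0 \<le> \<rho>" unfolding \<rho>_def using wr by (simp add: power_mono)
  have "emeasure lborel {t. w + t *\<^sub>R u \<in> K \<inter> cball 0 r} = ennreal (min b \<rho> - max a (-\<rho>))"
    unfolding line_Int ab(2) cball_line[OF u w] using wr by (simp add: \<rho>_def Icc_em)
  also have "\<dots> \<le> ennreal (min ((b-a)/2) \<rho> - max (-((b-a)/2)) (-\<rho>))"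
    by (rule ennreal_leI, rule R1[OF ab(1) \<rho>0]) simp
  also have "\<dots> = emeasure lborel {t. w + t *\<^sub>R u \<in> steiner u K \<inter> cball 0 r}"
    unfolding line_Int steiner_chord[OF u w wK] cball_line[OF u w] ab(3) using wr by (simp add: \<rho>_def Icc_em)
  finally show ?thesis .
qed

lemma pw_le:
  fixes K :: "'a::euclidean_space set"
  assumes K: "compact K" "convex K" and u: "norm u = 1"
  shows "emeasure lborel {t. z + t *\<^sub>R u \<in> K \<inter> cball 0 r} \<le> emeasure lborel {t. z + t *\<^sub>R u \<in> steiner u K \<inter> cball 0 r}"
proof -
  have m1: "K \<inter> cball 0 r \<in> sets borel" and m2: "steiner u K \<inter> cball 0 r \<in> sets borel"
    by (rule borel_closed, rule closed_Int[OF compact_imp_closed[OF K(1)] closed_cball],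
        rule borel_closed, rule closed_Int[OF compact_imp_closed[OF steiner_compact[OF K u]] closed_cball])
  have "emeasure lborel {t. perp_proj u z + t *\<^sub>R u \<in> K \<inter> cball 0 r} \<le> emeasure lborel {t. perp_proj u z + t *\<^sub>R u \<in> steiner u K \<inter> cball 0 r}"
    by (rule pw_le_perp[OF K u pp_inner[OF u]])
  then show ?thesis by (simp only: L4[OF u m1, of z] L4[OF u m2, of z])
qed

lemma pw_strict_perp:
  fixes K :: "'a::euclidean_space set"
  assumes K: "compact K" "convex K" and u: "norm u = 1" and w: "w \<bullet> u = 0"
    and wK: "w \<in> perp_proj u ` K" and wr: "norm w \<le> r" and \<delta>: "0 < \<delta>"
    and inK: "\<And>t. m - \<delta>/2 \<le> t \<Longrightarrow> t \<le> m + \<delta>/2 \<Longrightarrow> w + t *\<^sub>R u \<in> K"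
    and notS: "\<And>t. m - \<delta>/2 \<le> t \<Longrightarrow> t \<le> m + \<delta>/2 \<Longrightarrow> w + t *\<^sub>R u \<notin> steiner u K"
    and r1: "\<bar>m\<bar> - \<delta>/4 \<le> sqrt (r\<^sup>2 - (norm w)\<^sup>2)" and r2: "sqrt (r\<^sup>2 - (norm w)\<^sup>2) \<le> \<bar>m\<bar> + \<delta>/4"
  shows "emeasure lborel {t. w + t *\<^sub>R u \<in> K \<inter> cball 0 r} + ennreal (\<delta>/4) \<le> emeasure lborel {t. w + t *\<^sub>R u \<in> steiner u K \<inter> cball 0 r}"
proof -
  obtain a b where ab: "a \<le> b" "{t. w + t *\<^sub>R u \<in> K} = {a..b}" "chord_length u K w = b - a"
    using chord_interval[OF K u wK] by blast
  define \<rho> where "\<rho> = sqrt (r\<^sup>2 - (norm w)\<^sup>2)"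
  have \<rho>0: "0 \<le> \<rho>" unfolding \<rho>_def using wr by (simp add: power_mono)
  have "m - \<delta>/2 \<in> {t. w + t *\<^sub>R u \<in> K}" "m + \<delta>/2 \<in> {t. w + t *\<^sub>R u \<in> K}"
    using inK[of "m - \<delta>/2"] inK[of "m + \<delta>/2"] \<delta> by simp_all
  then have am: "a \<le> m - \<delta>/2" "m + \<delta>/2 \<le> b" unfolding ab(2) by simp_all
  have H: "(b - a)/2 < \<bar>t\<bar>" if "m - \<delta>/2 \<le> t" "t \<le> m + \<delta>/2" for t
  proof -
    have "\<not> \<bar>t\<bar> \<le> chord_length u K w / 2" using notS[OF that] steiner_mem[OF u w, of t K] wK by blast
    then show ?thesis unfolding ab(3) by simp
  qed
  have "emeasure lborel {t. w + t *\<^sub>R u \<in> K \<inter> cball 0 r} + ennreal (\<delta>/4) = ennreal (min b \<rho> - max a (-\<rho>)) + ennreal (\<delta>/4)"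
    unfolding line_Int ab(2) cball_line[OF u w] using wr by (simp add: \<rho>_def Icc_em)
  also have "\<dots> = ennreal (max 0 (min b \<rho> - max a (-\<rho>)) + \<delta>/4)"
  proof -
    have "ennreal (min b \<rho> - max a (-\<rho>)) = ennreal (max 0 (min b \<rho> - max a (-\<rho>)))"
      by (rule ennreal_max0)
    also have "\<dots> + ennreal (\<delta>/4) = ennreal (max 0 (min b \<rho> - max a (-\<rho>)) + \<delta>/4)"
      by (rule ennreal_plus[symmetric]) (use \<delta> in auto)
    finally show ?thesis by simp
  qed
  also have "\<dots> \<le> ennreal (min ((b-a)/2) \<rho> - max (-((b-a)/2)) (-\<rho>))"
    by (rule ennreal_leI, rule R2[OF ab(1) \<rho>0 \<delta> am refl H]) (use r1 r2 in \<open>simp_all add: \<rho>_def\<close>)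
  also have "\<dots> = emeasure lborel {t. w + t *\<^sub>R u \<in> steiner u K \<inter> cball 0 r}"
    unfolding line_Int steiner_chord[OF u w wK] cball_line[OF u w] ab(3) using wr by (simp add: \<rho>_def Icc_em)
  finally show ?thesis .
qed

lemma pp_cont: "continuous_on UNIV (perp_proj u)"
  unfolding perp_proj_def[abs_def] by (intro continuous_intros)

lemma pp_meas[measurable]: "perp_proj u \<in> borel_measurable borel"
  by (rule borel_measurable_continuous_onI[OF pp_cont])

lemma pp_add_line: "norm u = 1 \<Longrightarrow> perp_proj u (z + t *\<^sub>R u) = perp_proj u z"
  using uu[of u] by (simp add: perp_proj_def inner_add_left algebra_simps)

lemma exists_b0:
  fixes u :: "'a::euclidean_space"
  assumes "norm u = 1" obtains b0 where "b0 \<in> Basis" "u \<bullet> b0 \<noteq> 0"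
proof -
  have "u \<noteq> 0" using assms by auto
  then show ?thesis using that euclidean_all_zero_iff[of u] by blast
qed

lemma L3meas:
  fixes b0 u :: "'a::euclidean_space"
  assumes A[measurable]: "A \<in> sets borel"
  shows "(\<lambda>x. emeasure lborel {y. (\<Sum>b\<in>Basis-{b0}. x b *\<^sub>R b) + y *\<^sub>R u \<in> A}) \<in> borel_measurable (\<Pi>\<^sub>M b\<in>Basis-{b0}. lborel)"
proof -
  have "(\<lambda>x. (\<integral>\<^sup>+y. indicator A ((\<Sum>b\<in>Basis-{b0}. x b *\<^sub>R b) + y *\<^sub>R u) \<partial>lborel)) \<in> borel_measurable (\<Pi>\<^sub>M b\<in>Basis-{b0}. lborel)"
    by measurable
  moreover have "(\<integral>\<^sup>+y. indicator A (p + y *\<^sub>R u) \<partial>lborel) = emeasure lborel {y. p + y *\<^sub>R u \<in> A}" for p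
  proof -
    have [measurable]: "{y. p + y *\<^sub>R u \<in> A} \<in> sets lborel" by measurable
    have "(\<integral>\<^sup>+y. indicator A (p + y *\<^sub>R u) \<partial>lborel) = (\<integral>\<^sup>+y. indicator {y. p + y *\<^sub>R u \<in> A} y \<partial>lborel)"
      by (simp add: indicator_def)
    then show ?thesis by simp
  qed
  ultimately show ?thesis by simp
qed

lemma cball_borel: "compact S \<Longrightarrow> S \<inter> cball 0 r \<in> sets borel"
  by (rule borel_closed, rule closed_Int[OF compact_imp_closed closed_cball])

lemma vol_le:
  fixes K :: "'a::euclidean_space set"
  assumes K: "compact K" "convex K" and u: "norm u = 1"
  shows "emeasure lborel (K \<inter> cball 0 r) \<le> emeasure lborel (steiner u K \<inter> cball 0 r)"
proof -
  obtain b0 where b0: "b0 \<in> Basis" "u \<bullet> b0 \<noteq> 0" using exists_b0[OF u] by blast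
  have m1: "K \<inter> cball 0 r \<in> sets borel" and m2: "steiner u K \<inter> cball 0 r \<in> sets borel"
    using cball_borel K(1) steiner_compact[OF K u] by blast+
  show ?thesis
    unfolding L3[OF b0 m1] L3[OF b0 m2]
    by (intro mult_left_mono nn_integral_mono pw_le[OF K u]) simp
qed

lemma vol_strict:
  fixes K :: "'a::euclidean_space set"
  assumes K: "compact K" "convex K" and u: "norm u = 1" and \<delta>: "0 < \<delta>"
    and H: "\<And>w. w \<bullet> u = 0 \<Longrightarrow> norm (w - q0) < \<eta> \<Longrightarrow>
        (\<forall>t. m - \<delta>/2 \<le> t \<and> t \<le> m + \<delta>/2 \<longrightarrow> w + t *\<^sub>R u \<in> K \<and> w + t *\<^sub>R u \<notin> steiner u K) \<and>
        norm w \<le> r \<and> \<bar>m\<bar> - \<delta>/4 \<le> sqrt (r\<^sup>2 - (norm w)\<^sup>2) \<and> sqrt (r\<^sup>2 - (norm w)\<^sup>2) \<le> \<bar>m\<bar> + \<delta>/4"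
  shows "emeasure lborel (K \<inter> cball 0 r) + ennreal (\<delta>/4) * emeasure lborel {z. norm (perp_proj u z - q0) < \<eta> \<and> 0 \<le> z \<bullet> u \<and> z \<bullet> u \<le> 1}
     \<le> emeasure lborel (steiner u K \<inter> cball 0 r)"
proof -
  define A0 where "A0 = {z. norm (perp_proj u z - q0) < \<eta> \<and> 0 \<le> z \<bullet> u \<and> z \<bullet> u \<le> 1}"
  obtain b0 where b0: "b0 \<in> Basis" "u \<bullet> b0 \<noteq> 0" using exists_b0[OF u] by blast
  have m1: "K \<inter> cball 0 r \<in> sets borel" and m2: "steiner u K \<inter> cball 0 r \<in> sets borel"
    using cball_borel K(1) steiner_compact[OF K u] by blast+
  have m3[measurable]: "A0 \<in> sets borel" unfolding A0_def by measurable
  let ?F = "\<lambda>A z. emeasure lborel {t. z + t *\<^sub>R u \<in> A}"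
  have pw: "?F (K \<inter> cball 0 r) z + ennreal (\<delta>/4) * ?F A0 z \<le> ?F (steiner u K \<inter> cball 0 r) z" for z
  proof (cases "norm (perp_proj u z - q0) < \<eta>")
    case True
    define w where "w = perp_proj u z"
    have wu: "w \<bullet> u = 0" unfolding w_def using pp_inner[OF u] .
    have Hw: "(\<forall>t. m - \<delta>/2 \<le> t \<and> t \<le> m + \<delta>/2 \<longrightarrow> w + t *\<^sub>R u \<in> K \<and> w + t *\<^sub>R u \<notin> steiner u K)"
      "norm w \<le> r" "\<bar>m\<bar> - \<delta>/4 \<le> sqrt (r\<^sup>2 - (norm w)\<^sup>2)" "sqrt (r\<^sup>2 - (norm w)\<^sup>2) \<le> \<bar>m\<bar> + \<delta>/4"
      using H[OF wu] True unfolding w_def by blast+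
    have "w + m *\<^sub>R u \<in> K" using Hw(1) \<delta> by auto
    then have wK: "w \<in> perp_proj u ` K" using pp_line[OF u wu, of m] by (metis image_eqI)
    have "{t. z + t *\<^sub>R u \<in> A0} \<subseteq> {- (z \<bullet> u) .. 1 - z \<bullet> u}"
      unfolding A0_def using uu[OF u] by (auto simp: inner_add_left)
    then have "?F A0 z \<le> emeasure lborel {- (z \<bullet> u) .. 1 - z \<bullet> u}" by (rule emeasure_mono) simp
    also have "\<dots> = 1" by (simp add: Icc_em)
    finally have F1: "?F A0 z \<le> 1" .
    have "?F (K \<inter> cball 0 r) z + ennreal (\<delta>/4) * ?F A0 z \<le> ?F (K \<inter> cball 0 r) z + ennreal (\<delta>/4) * 1"
      by (intro add_left_mono mult_left_mono F1) simp
    also have "\<dots> = ?F (K \<inter> cball 0 r) w + ennreal (\<delta>/4)" unfolding w_def by (simp only: L4[OF u m1, of z] mult_1_right)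
    also have "\<dots> \<le> ?F (steiner u K \<inter> cball 0 r) w"
      by (rule pw_strict_perp[OF K u wu wK Hw(2) \<delta>]) (use Hw in auto)
    also have "\<dots> = ?F (steiner u K \<inter> cball 0 r) z" unfolding w_def by (simp only: L4[OF u m2, of z])
    finally show ?thesis .
  next
    case False
    have "{t. z + t *\<^sub>R u \<in> A0} = {}" unfolding A0_def using False pp_add_line[OF u] by auto
    then have "?F A0 z = 0" by (simp only: emeasure_empty)
    then show ?thesis using pw_le[OF K u, of z r] by simp
  qed
  let ?P = "\<lambda>x. (\<Sum>b\<in>Basis-{b0}. x b *\<^sub>R b)"
  let ?M = "\<Pi>\<^sub>M b\<in>Basis-{b0}. (lborel::real measure)"
  have [measurable]: "(\<lambda>x. ?F A (?P x)) \<in> borel_measurable ?M" if "A \<in> sets borel" for A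
    using L3meas[OF that] by simp
  have "emeasure lborel (K \<inter> cball 0 r) + ennreal (\<delta>/4) * emeasure lborel A0 =
     ennreal \<bar>u \<bullet> b0\<bar> * (\<integral>\<^sup>+x. ?F (K \<inter> cball 0 r) (?P x) \<partial>?M) + ennreal (\<delta>/4) * (ennreal \<bar>u \<bullet> b0\<bar> * (\<integral>\<^sup>+x. ?F A0 (?P x) \<partial>?M))"
    by (simp only: L3[OF b0 m1] L3[OF b0 m3])
  also have "\<dots> = ennreal \<bar>u \<bullet> b0\<bar> * ((\<integral>\<^sup>+x. ?F (K \<inter> cball 0 r) (?P x) \<partial>?M) + ennreal (\<delta>/4) * (\<integral>\<^sup>+x. ?F A0 (?P x) \<partial>?M))"
    by (simp add: distrib_left mult.left_commute)
  also have "\<dots> = ennreal \<bar>u \<bullet> b0\<bar> * (\<integral>\<^sup>+x. ?F (K \<inter> cball 0 r) (?P x) + ennreal (\<delta>/4) * ?F A0 (?P x) \<partial>?M)"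
  proof -
    have "(\<integral>\<^sup>+x. ?F (K \<inter> cball 0 r) (?P x) + ennreal (\<delta>/4) * ?F A0 (?P x) \<partial>?M) =
       (\<integral>\<^sup>+x. ?F (K \<inter> cball 0 r) (?P x) \<partial>?M) + (\<integral>\<^sup>+x. ennreal (\<delta>/4) * ?F A0 (?P x) \<partial>?M)"
      by (rule nn_integral_add) (use m1 m3 in measurable)
    also have "(\<integral>\<^sup>+x. ennreal (\<delta>/4) * ?F A0 (?P x) \<partial>?M) = ennreal (\<delta>/4) * (\<integral>\<^sup>+x. ?F A0 (?P x) \<partial>?M)"
      by (rule nn_integral_cmult) (use m3 in measurable)
    finally show ?thesis by simp
  qed
  also have "\<dots> \<le> ennreal \<bar>u \<bullet> b0\<bar> * (\<integral>\<^sup>+x. ?F (steiner u K \<inter> cball 0 r) (?P x) \<partial>?M)"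
    by (intro mult_left_mono nn_integral_mono pw) simp
  also have "\<dots> = emeasure lborel (steiner u K \<inter> cball 0 r)"
    by (simp only: L3[OF b0 m2])
  finally show ?thesis unfolding A0_def .
qed

lemma norm_pp_le:
  assumes u: "norm u = 1" shows "norm (perp_proj u x) \<le> norm x"
proof -
  have "perp_proj u x \<bullet> perp_proj u x = x \<bullet> x - (x \<bullet> u)\<^sup>2"
    using uu[OF u] by (simp add: perp_proj_def inner_diff_left inner_diff_right inner_commute power2_eq_square)
  then have "(norm (perp_proj u x))\<^sup>2 \<le> (norm x)\<^sup>2" by (simp add: power2_norm_eq_inner)
  then show ?thesis using power2_le_imp_le by fastforce
qed

lemma pp_diff: "perp_proj u (x - y) = perp_proj u x - perp_proj u y"
  by (simp add: perp_proj_def inner_diff_left algebra_simps)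

lemma A0_props:
  fixes u q0 :: "'a::euclidean_space"
  assumes u: "norm u = 1" and q0: "q0 \<bullet> u = 0" and \<eta>: "0 < \<eta>"
  shows "0 < emeasure lborel {z. norm (perp_proj u z - q0) < \<eta> \<and> 0 \<le> z \<bullet> u \<and> z \<bullet> u \<le> 1}"
    and "emeasure lborel {z. norm (perp_proj u z - q0) < \<eta> \<and> 0 \<le> z \<bullet> u \<and> z \<bullet> u \<le> 1} < \<infinity>"
proof -
  define A0 where "A0 = {z. norm (perp_proj u z - q0) < \<eta> \<and> 0 \<le> z \<bullet> u \<and> z \<bullet> u \<le> 1}"
  define c where "c = q0 + (1/2) *\<^sub>R u"
  define \<epsilon> where "\<epsilon> = min \<eta> (1/2)"
  have \<epsilon>: "0 < \<epsilon>" unfolding \<epsilon>_def using \<eta> by simp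
  have ppc: "perp_proj u c = q0" unfolding c_def using pp_line[OF u q0] by simp
  have cu: "c \<bullet> u = 1/2" unfolding c_def using inner_line[OF u q0] by simp
  have "ball c \<epsilon> \<subseteq> A0"
  proof
    fix z assume "z \<in> ball c \<epsilon>"
    then have d: "norm (z - c) < \<epsilon>" by (simp add: dist_norm norm_minus_commute)
    have "norm (perp_proj u z - q0) = norm (perp_proj u (z - c))" by (simp add: pp_diff ppc)
    also have "\<dots> \<le> norm (z - c)" by (rule norm_pp_le[OF u])
    finally have 1: "norm (perp_proj u z - q0) < \<eta>" using d unfolding \<epsilon>_def by simp
    have "\<bar>(z - c) \<bullet> u\<bar> \<le> norm (z - c) * norm u" by (rule Cauchy_Schwarz_ineq2)
    then have "\<bar>z \<bullet> u - 1/2\<bar> < 1/2" using d u cu unfolding \<epsilon>_def by (simp add: inner_diff_left)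
    then have "0 \<le> z \<bullet> u" "z \<bullet> u \<le> 1" by linarith+
    then show "z \<in> A0" unfolding A0_def using 1 by auto
  qed
  then have "emeasure lborel (ball c \<epsilon>) \<le> emeasure lborel A0" by (rule emeasure_mono) (simp add: A0_def)
  moreover have "0 < emeasure lborel (ball c \<epsilon>)" using \<epsilon> by (simp add: emeasure_ball)
  ultimately show "0 < emeasure lborel A0" by order
  have "A0 \<subseteq> cball 0 (norm q0 + \<eta> + 1)"
  proof
    fix z assume z: "z \<in> A0"
    have "norm z = norm (perp_proj u z + (z \<bullet> u) *\<^sub>R u)" using pp_decomp[of z u] by simp
    also have "\<dots> \<le> norm (perp_proj u z) + \<bar>z \<bullet> u\<bar>" using norm_triangle_ineq[of "perp_proj u z" "(z \<bullet> u) *\<^sub>R u"] u by simp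
    also have "norm (perp_proj u z) \<le> norm q0 + \<eta>" using z unfolding A0_def
      by (smt (verit, best) mem_Collect_eq norm_triangle_ineq2)
    finally show "z \<in> cball 0 (norm q0 + \<eta> + 1)" using z unfolding A0_def by auto
  qed
  then have "bounded A0" using bounded_cball bounded_subset by blast
  then show "emeasure lborel A0 < \<infinity>" by (rule emeasure_bounded_finite)
qed

lemma RR:
  fixes N nw \<eta> \<tau> M \<delta> r :: real
  assumes N: "0 \<le> N" and nw: "0 \<le> nw" and d: "\<bar>nw - N\<bar> < \<eta>" and \<eta>1: "\<eta> \<le> 1" and \<eta>\<tau>: "\<eta> * (2 * N + 1) \<le> \<tau>"
    and \<tau>: "\<tau> = M * \<delta> / 4" and M: "\<delta>/2 < M" and \<delta>: "0 < \<delta>" and r0: "0 \<le> r"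
    and r1: "N\<^sup>2 + (M - \<delta>/4)\<^sup>2 + \<tau> \<le> r\<^sup>2" and r2: "r\<^sup>2 \<le> N\<^sup>2 + (M - \<delta>/4)\<^sup>2 + 3 * \<tau>"
  shows "nw \<le> r \<and> M - \<delta>/4 \<le> sqrt (r\<^sup>2 - nw\<^sup>2) \<and> sqrt (r\<^sup>2 - nw\<^sup>2) \<le> M + \<delta>/4"
proof -
  have e0: "0 < \<eta>" using d by linarith
  have "nw\<^sup>2 - N\<^sup>2 = (nw - N) * (nw + N)" by (simp add: power2_eq_square algebra_simps)
  then have "\<bar>nw\<^sup>2 - N\<^sup>2\<bar> = \<bar>nw - N\<bar> * (nw + N)" using N nw by (simp add: abs_mult)
  also have "\<dots> \<le> \<eta> * (2 * N + 1)"
  proof (rule mult_mono)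
    show "\<bar>nw - N\<bar> \<le> \<eta>" using d by simp
    show "nw + N \<le> 2 * N + 1" using d \<eta>1 by linarith
  qed (use e0 N nw in auto)
  finally have q: "\<bar>nw\<^sup>2 - N\<^sup>2\<bar> \<le> \<tau>" using \<eta>\<tau> by linarith
  have lo: "(M - \<delta>/4)\<^sup>2 \<le> r\<^sup>2 - nw\<^sup>2" using r1 q by linarith
  have hi: "r\<^sup>2 - nw\<^sup>2 \<le> (M + \<delta>/4)\<^sup>2"
  proof -
    have "(M + \<delta>/4)\<^sup>2 = (M - \<delta>/4)\<^sup>2 + 4 * \<tau>" unfolding \<tau> by (simp add: power2_eq_square algebra_simps)
    then show ?thesis using r2 q by linarith
  qed
  have "nw\<^sup>2 \<le> r\<^sup>2" using lo by (smt (verit) zero_le_power2)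
  then have "nw \<le> r" using r0 power2_le_imp_le by blast
  moreover have "M - \<delta>/4 \<le> sqrt (r\<^sup>2 - nw\<^sup>2)" using lo M \<delta> by (simp add: real_le_rsqrt)
  moreover have "sqrt (r\<^sup>2 - nw\<^sup>2) \<le> M + \<delta>/4"
  proof -
    have "sqrt (r\<^sup>2 - nw\<^sup>2) \<le> sqrt ((M + \<delta>/4)\<^sup>2)" using hi by (rule real_sqrt_le_mono)
    also have "\<dots> = M + \<delta>/4" using M \<delta> by simp
    finally show ?thesis .
  qed
  ultimately show ?thesis by simp
qed


lemma em_meas:
  fixes S :: "'a::euclidean_space set"
  assumes "compact S"
  shows "emeasure lborel (S \<inter> cball 0 r) = ennreal (measure lebesgue (S \<inter> cball 0 r))"
proof -
  have m: "S \<inter> cball 0 r \<in> sets borel" using cball_borel[OF assms] .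
  have "bounded (S \<inter> cball 0 r)" by (simp add: bounded_Int)
  then have "emeasure lborel (S \<inter> cball 0 r) < \<infinity>" by (rule emeasure_bounded_finite)
  then have "emeasure lborel (S \<inter> cball 0 r) = ennreal (measure lborel (S \<inter> cball 0 r))"
    by (intro emeasure_eq_ennreal_measure) auto
  also have "measure lborel (S \<inter> cball 0 r) = measure lebesgue (S \<inter> cball 0 r)"
    using m by simp
  finally show ?thesis .
qed

lemma bad_ball:
  fixes K :: "'a::euclidean_space set"
  assumes K: "compact K" "convex K" and int: "interior K \<noteq> {}" and u: "norm u = 1"
    and p: "p \<in> K" "p \<notin> steiner u K"
  obtains q \<delta> where "0 < \<delta>" "\<And>y. norm (y - q) \<le> \<delta> \<Longrightarrow> y \<in> K \<and> y \<notin> steiner u K"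
proof -
  have "closed (steiner u K)" using steiner_compact[OF K u] compact_imp_closed by blast
  then obtain \<epsilon> where \<epsilon>: "0 < \<epsilon>" "ball p \<epsilon> \<subseteq> - steiner u K"
    using p(2) open_contains_ball[of "- steiner u K"] by auto
  have "closure (interior K) = K"
    using convex_closure_interior[OF K(2) int] closure_closed[OF compact_imp_closed[OF K(1)]] by simp
  then have "p \<in> closure (interior K)" using p by simp
  then obtain q where q: "q \<in> interior K" "dist q p < \<epsilon>/2"
    using closure_approachable[of p "interior K"] \<epsilon> by (metis half_gt_zero)
  obtain e where e: "0 < e" "ball q e \<subseteq> K" using q(1) mem_interior by blast
  define \<delta> where "\<delta> = min (e/2) (\<epsilon>/4)"
  show ?thesis
  proof (rule that[of \<delta> q])
    show "0 < \<delta>" unfolding \<delta>_def using e \<epsilon> by simp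
    fix y assume y: "norm (y - q) \<le> \<delta>"
    have "dist q y < e" using y e unfolding \<delta>_def by (simp add: dist_norm norm_minus_commute)
    then have "y \<in> K" using e by auto
    moreover have "dist p y < \<epsilon>"
    proof -
      have "dist p y \<le> dist p q + dist q y" by (rule dist_triangle)
      also have "\<dots> < \<epsilon>" using q(2) y \<epsilon> unfolding \<delta>_def by (simp add: dist_commute dist_norm norm_minus_commute)
      finally show ?thesis .
    qed
    then have "y \<notin> steiner u K" using \<epsilon> by auto
    ultimately show "y \<in> K \<and> y \<notin> steiner u K" by simp
  qed
qed

lemma strict_exists:
  fixes K :: "'a::euclidean_space set"
  assumes K: "compact K" "convex K" and int: "interior K \<noteq> {}" and u: "norm u = 1"
    and p: "p \<in> K" "p \<notin> steiner u K"
  obtains r1 r2 \<kappa> where "0 \<le> r1" "r1 < r2" "0 < \<kappa>"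
    "\<And>r. r1 \<le> r \<Longrightarrow> r \<le> r2 \<Longrightarrow> measure lebesgue (K \<inter> cball 0 r) + \<kappa> \<le> measure lebesgue (steiner u K \<inter> cball 0 r)"
proof -
  obtain q \<delta> where \<delta>: "0 < \<delta>" and qb: "\<And>y. norm (y - q) \<le> \<delta> \<Longrightarrow> y \<in> K \<and> y \<notin> steiner u K"
    using bad_ball[OF K int u p] by blast
  define q0 where "q0 = perp_proj u q"
  define m where "m = q \<bullet> u"
  have q0u: "q0 \<bullet> u = 0" unfolding q0_def by (rule pp_inner[OF u])
  have qeq: "q = q0 + m *\<^sub>R u" unfolding q0_def m_def by (rule pp_decomp)
  have inball: "w + t *\<^sub>R u \<in> K \<and> w + t *\<^sub>R u \<notin> steiner u K"
    if "norm (w - q0) < \<delta>/2" "m - \<delta>/2 \<le> t" "t \<le> m + \<delta>/2" for w t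
  proof (rule qb)
    have eq: "w + t *\<^sub>R u - q = (w - q0) + (t - m) *\<^sub>R u" unfolding qeq by (simp add: algebra_simps)
    have "norm ((w - q0) + (t - m) *\<^sub>R u) \<le> norm (w - q0) + \<bar>t - m\<bar>"
      using norm_triangle_ineq[of "w - q0" "(t - m) *\<^sub>R u"] u by simp
    then have "norm (w + t *\<^sub>R u - q) \<le> norm (w - q0) + \<bar>t - m\<bar>" unfolding eq .
    also have "\<dots> \<le> \<delta>" using that by linarith
    finally show "norm (w + t *\<^sub>R u - q) \<le> \<delta>" .
  qed
  define M where "M = \<bar>m\<bar>"
  have M: "\<delta>/2 < M"
  proof (rule ccontr)
    assume "\<not> \<delta>/2 < M"
    then have "q0 + 0 *\<^sub>R u \<notin> steiner u K" using inball[of q0 0] \<delta> unfolding M_def by auto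
    moreover have "q0 \<in> perp_proj u ` K" unfolding q0_def using qb[of q] \<delta> by auto
    moreover have "0 \<le> chord_length u K q0" unfolding chord_length_def by simp
    ultimately show False using steiner_mem[OF u q0u, of 0 K] by simp
  qed
  define N where "N = norm q0"
  define \<tau> where "\<tau> = M * \<delta> / 4"
  define \<eta> where "\<eta> = min (\<delta>/2) (min 1 (\<tau> / (2 * N + 1)))"
  have N0: "0 \<le> N" unfolding N_def by simp
  have \<tau>0: "0 < \<tau>" unfolding \<tau>_def using M \<delta> by simp
  have \<eta>0: "0 < \<eta>" unfolding \<eta>_def using \<delta> \<tau>0 N0 by simp
  have \<eta>1: "\<eta> \<le> 1" "\<eta> \<le> \<delta>/2" unfolding \<eta>_def by (simp_all only: min.coboundedI1 min.coboundedI2 order_refl)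
  have \<eta>\<tau>: "\<eta> * (2 * N + 1) \<le> \<tau>"
  proof -
    have "\<eta> \<le> \<tau> / (2 * N + 1)" unfolding \<eta>_def by simp
    then show ?thesis using N0 by (simp add: pos_le_divide_eq)
  qed
  define E where "E = emeasure lborel {z. norm (perp_proj u z - q0) < \<eta> \<and> 0 \<le> z \<bullet> u \<and> z \<bullet> u \<le> 1}"
  have E: "0 < E" "E < \<infinity>" unfolding E_def using A0_props[OF u q0u \<eta>0] by auto
  define r1 where "r1 = sqrt (N\<^sup>2 + (M - \<delta>/4)\<^sup>2 + \<tau>)"
  define r2 where "r2 = sqrt (N\<^sup>2 + (M - \<delta>/4)\<^sup>2 + 3 * \<tau>)"
  define \<kappa> where "\<kappa> = \<delta>/4 * enn2real E"
  show ?thesis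
  proof (rule that[of r1 r2 \<kappa>])
    show "0 \<le> r1" unfolding r1_def using \<tau>0 by simp
    show "r1 < r2" unfolding r1_def r2_def using \<tau>0 by simp
    show "0 < \<kappa>" unfolding \<kappa>_def using \<delta> E by (simp add: enn2real_positive_iff)
    fix r assume r: "r1 \<le> r" "r \<le> r2"
    have r0: "0 \<le> r" using r \<open>0 \<le> r1\<close> by linarith
    have rr1: "N\<^sup>2 + (M - \<delta>/4)\<^sup>2 + \<tau> \<le> r\<^sup>2"
    proof -
      have "r1\<^sup>2 \<le> r\<^sup>2" using r(1) \<open>0 \<le> r1\<close> by (simp add: power_mono)
      moreover have "r1\<^sup>2 = N\<^sup>2 + (M - \<delta>/4)\<^sup>2 + \<tau>" unfolding r1_def using \<tau>0 by simp
      ultimately show ?thesis by simp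
    qed
    have rr2: "r\<^sup>2 \<le> N\<^sup>2 + (M - \<delta>/4)\<^sup>2 + 3 * \<tau>"
    proof -
      have "r\<^sup>2 \<le> r2\<^sup>2" using r(2) r0 by (simp add: power_mono)
      moreover have "r2\<^sup>2 = N\<^sup>2 + (M - \<delta>/4)\<^sup>2 + 3 * \<tau>" unfolding r2_def using \<tau>0 by simp
      ultimately show ?thesis by simp
    qed
    have H: "(\<forall>t. m - \<delta>/2 \<le> t \<and> t \<le> m + \<delta>/2 \<longrightarrow> w + t *\<^sub>R u \<in> K \<and> w + t *\<^sub>R u \<notin> steiner u K) \<and>
        norm w \<le> r \<and> \<bar>m\<bar> - \<delta>/4 \<le> sqrt (r\<^sup>2 - (norm w)\<^sup>2) \<and> sqrt (r\<^sup>2 - (norm w)\<^sup>2) \<le> \<bar>m\<bar> + \<delta>/4"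
      if "w \<bullet> u = 0" "norm (w - q0) < \<eta>" for w
    proof -
      have "\<bar>norm w - N\<bar> < \<eta>" unfolding N_def using norm_triangle_ineq3[of w q0] that(2) by linarith
      then have "norm w \<le> r \<and> M - \<delta>/4 \<le> sqrt (r\<^sup>2 - (norm w)\<^sup>2) \<and> sqrt (r\<^sup>2 - (norm w)\<^sup>2) \<le> M + \<delta>/4"
        using RR[OF N0 norm_ge_zero _ \<eta>1(1) \<eta>\<tau> \<tau>_def M \<delta> r0 rr1 rr2] by blast
      moreover have "norm (w - q0) < \<delta>/2" using that(2) \<eta>1 by linarith
      ultimately show ?thesis using inball M_def by blast
    qed
    have "emeasure lborel (K \<inter> cball 0 r) + ennreal (\<delta>/4) * E \<le> emeasure lborel (steiner u K \<inter> cball 0 r)"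
      unfolding E_def by (rule vol_strict[OF K u \<delta> H]) auto
    then have "ennreal (measure lebesgue (K \<inter> cball 0 r)) + ennreal (\<delta>/4) * ennreal (enn2real E)
        \<le> ennreal (measure lebesgue (steiner u K \<inter> cball 0 r))"
      using em_meas[OF K(1), of r] em_meas[OF steiner_compact[OF K u], of r] E by (simp add: ennreal_enn2real)
    then have "ennreal (measure lebesgue (K \<inter> cball 0 r) + \<kappa>) \<le> ennreal (measure lebesgue (steiner u K \<inter> cball 0 r))"
    proof -
      have "ennreal (\<delta>/4) * ennreal (enn2real E) = ennreal \<kappa>"
        unfolding \<kappa>_def using \<delta> by (simp add: ennreal_mult[symmetric])
      moreover have "ennreal (measure lebesgue (K \<inter> cball 0 r)) + ennreal \<kappa> = ennreal (measure lebesgue (K \<inter> cball 0 r) + \<kappa>)"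
        using \<open>0 < \<kappa>\<close> by (simp add: ennreal_plus)
      ultimately show ?thesis using \<open>ennreal (measure lebesgue (K \<inter> cball 0 r)) + ennreal (\<delta>/4) * ennreal (enn2real E)
        \<le> ennreal (measure lebesgue (steiner u K \<inter> cball 0 r))\<close> by simp
    qed
    then show "measure lebesgue (K \<inter> cball 0 r) + \<kappa> \<le> measure lebesgue (steiner u K \<inter> cball 0 r)"
      by (simp add: ennreal_le_iff)
  qed
qed

lemma V_le_total:
  fixes S :: "'a::euclidean_space set"
  assumes "compact S"
  shows "measure lebesgue (S \<inter> cball 0 r) \<le> measure lebesgue S"
proof (rule measure_mono_fmeasurable)
  have "compact (S \<inter> cball 0 r)" using assms by (simp add: compact_Int_closed)
  then show "S \<inter> cball 0 r \<in> sets lebesgue" using lmeasurable_compact fmeasurableD by blast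
qed (auto intro: lmeasurable_compact assms)

lemma V_mono:
  fixes S :: "'a::euclidean_space set"
  assumes "compact S"
  shows "mono (\<lambda>r. measure lebesgue (S \<inter> cball 0 r))"
proof (rule monoI)
  fix r s :: real assume "r \<le> s"
  then have "S \<inter> cball 0 r \<subseteq> S \<inter> cball 0 s" by auto
  then show "measure lebesgue (S \<inter> cball 0 r) \<le> measure lebesgue (S \<inter> cball 0 s)"
  proof (rule measure_mono_fmeasurable)
  have "compact (S \<inter> cball 0 r)" using assms by (simp add: compact_Int_closed)
  then show "S \<inter> cball 0 r \<in> sets lebesgue" using lmeasurable_compact fmeasurableD by blast
qed (auto intro: lmeasurable_compact assms)
qed

lemma layer_integrable:
  fixes S :: "'a::euclidean_space set"
  assumes S: "compact S"
  shows "integrable lborel (\<lambda>r. indicator {0..} r *\<^sub>R (measure lebesgue (S \<inter> cball 0 r) * exp (- (r\<^sup>2))))"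
proof (rule Bochner_Integration.integrable_bound)
  show "integrable lborel (\<lambda>r. measure lebesgue S * (indicator {0..} r *\<^sub>R exp (- r\<^sup>2)))"
    using integrable.intros[OF gaussian_moment_0] by simp
  have [measurable]: "(\<lambda>r. measure lebesgue (S \<inter> cball 0 r)) \<in> borel_measurable borel"
    by (rule borel_measurable_mono[OF V_mono[OF S]])
  show "(\<lambda>r. indicator {0..} r *\<^sub>R (measure lebesgue (S \<inter> cball 0 r) * exp (- (r\<^sup>2)))) \<in> borel_measurable lborel"
    by measurable
  show "AE r in lborel. norm (indicator {0..} r *\<^sub>R (measure lebesgue (S \<inter> cball 0 r) * exp (- (r\<^sup>2))))
       \<le> norm (measure lebesgue S * (indicator {0..} r *\<^sub>R exp (- r\<^sup>2)))"
  proof (rule AE_I2)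
    fix r :: real
    have "0 \<le> measure lebesgue (S \<inter> cball 0 r)" by simp
    moreover have "measure lebesgue (S \<inter> cball 0 r) \<le> measure lebesgue S" by (rule V_le_total[OF S])
    ultimately show "norm (indicator {0..} r *\<^sub>R (measure lebesgue (S \<inter> cball 0 r) * exp (- (r\<^sup>2))))
       \<le> norm (measure lebesgue S * (indicator {0..} r *\<^sub>R exp (- r\<^sup>2)))"
      by (auto simp: indicator_def abs_mult intro!: mult_right_mono)
  qed
qed

theorem theorem3p1:
  fixes K :: "'a::euclidean_space set" and u :: 'a
  assumes "compact K" and "convex K" and "K \<noteq> {}" and "norm u = 1"
  shows "layering (steiner u K) \<ge> layering K \<and>
         (interior K \<noteq> {} \<longrightarrow> (layering (steiner u K) = layering K \<longleftrightarrow> steiner u K = K))"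
proof -
  have K: "compact K" "convex K" and u: "norm u = 1" using assms by auto
  have sK: "compact (steiner u K)" by (rule steiner_compact[OF K u])
  define V where "V S r = measure lebesgue (S \<inter> cball 0 r)" for S :: "'a set" and r :: real
  define f where "f S r = indicator {0..} r *\<^sub>R (V S r * exp (- (r\<^sup>2)))" for S :: "'a set" and r :: real
  have lay: "layering S = integral\<^sup>L lborel (f S)" for S
    unfolding layering_def set_lebesgue_integral_def f_def V_def by simp
  have fint: "integrable lborel (f K)" "integrable lborel (f (steiner u K))"
    unfolding f_def V_def using layer_integrable[OF K(1)] layer_integrable[OF sK] by auto
  have Vle: "V K r \<le> V (steiner u K) r" for r
  proof -
    have "ennreal (V K r) \<le> ennreal (V (steiner u K) r)"
      using vol_le[OF K u, of r] unfolding V_def em_meas[OF K(1)] em_meas[OF sK] .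
    moreover have "0 \<le> V (steiner u K) r" unfolding V_def by simp
    ultimately show ?thesis by (simp add: ennreal_le_iff)
  qed
  have fle: "f K r \<le> f (steiner u K) r" for r
    unfolding f_def using Vle[of r] by (auto simp: indicator_def)
  have le: "layering K \<le> layering (steiner u K)"
    unfolding lay by (rule integral_mono[OF fint fle])
  have K_sub: "K \<subseteq> steiner u K" if int: "interior K \<noteq> {}" and E: "layering (steiner u K) = layering K"
  proof
    fix p assume pK: "p \<in> K"
    show "p \<in> steiner u K"
    proof (rule ccontr)
      assume pS: "p \<notin> steiner u K"
      obtain r1 r2 \<kappa> where r12: "0 \<le> r1" "r1 < r2" and \<kappa>: "0 < \<kappa>"
        and st: "\<And>r. r1 \<le> r \<Longrightarrow> r \<le> r2 \<Longrightarrow> V K r + \<kappa> \<le> V (steiner u K) r"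
        using strict_exists[OF K int u pK pS] unfolding V_def by blast
      define c where "c = \<kappa> * exp (- (r2\<^sup>2))"
      have c0: "0 < c" unfolding c_def using \<kappa> by simp
      define h where "h r = indicator {r1..r2} r * c" for r :: real
      have hint: "integrable lborel h" unfolding h_def
        by (intro integrable_mult_left integrable_real_indicator) (auto simp: Icc_em)
      have hI: "integral\<^sup>L lborel h = (r2 - r1) * c"
        unfolding h_def using r12 by simp
      have pw: "f K r + h r \<le> f (steiner u K) r" for r
      proof (cases "r1 \<le> r \<and> r \<le> r2")
        case True
        then have r0: "0 \<le> r" using r12 by linarith
        have "exp (- (r2\<^sup>2)) \<le> exp (- (r\<^sup>2))"
          using True r0 by (simp add: power_mono)
        then have "c \<le> \<kappa> * exp (- (r\<^sup>2))" unfolding c_def using \<kappa> by simp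
        then have "f K r + h r \<le> V K r * exp (- (r\<^sup>2)) + \<kappa> * exp (- (r\<^sup>2))"
          unfolding f_def h_def using True r0 by simp
        also have "\<dots> = (V K r + \<kappa>) * exp (- (r\<^sup>2))" by (simp add: algebra_simps)
        also have "\<dots> \<le> V (steiner u K) r * exp (- (r\<^sup>2))"
          using st[of r] True by simp
        also have "\<dots> = f (steiner u K) r" unfolding f_def using r0 by simp
        finally show ?thesis .
      next
        case False
        then have "h r = 0" unfolding h_def by simp
        then show ?thesis using fle[of r] by simp
      qed
      have "integral\<^sup>L lborel (f K) + (r2 - r1) * c = integral\<^sup>L lborel (\<lambda>r. f K r + h r)"
        using Bochner_Integration.integral_add[OF fint(1) hint] hI by simp
      also have "\<dots> \<le> integral\<^sup>L lborel (f (steiner u K))"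
        by (rule integral_mono[OF Bochner_Integration.integrable_add[OF fint(1) hint] fint(2) pw])
      finally have "layering K + (r2 - r1) * c \<le> layering (steiner u K)" unfolding lay .
      moreover have "0 < (r2 - r1) * c" using r12 c0 by simp
      ultimately show False using E by simp
    qed
  qed
  have S_sub: "steiner u K \<subseteq> K" if sub: "K \<subseteq> steiner u K"
  proof
    fix p assume "p \<in> steiner u K"
    then obtain w t where wt: "p = w + t *\<^sub>R u" "w \<in> perp_proj u ` K" "\<bar>t\<bar> \<le> chord_length u K w / 2"
      unfolding steiner_def by blast
    have wu: "w \<bullet> u = 0" using wt(2) pp_inner[OF u] by auto
    obtain a b where ab: "a \<le> b" "{t. w + t *\<^sub>R u \<in> K} = {a..b}" "chord_length u K w = b - a"
      using chord_interval[OF K u wt(2)] by blast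
    have "w + a *\<^sub>R u \<in> K" "w + b *\<^sub>R u \<in> K" using ab by auto
    then have "w + a *\<^sub>R u \<in> steiner u K" "w + b *\<^sub>R u \<in> steiner u K" using sub by auto
    then have "\<bar>a\<bar> \<le> (b - a) / 2" "\<bar>b\<bar> \<le> (b - a) / 2" using steiner_mem[OF u wu] ab(3) by auto
    then have ab2: "-a \<le> (b - a) / 2" "b \<le> (b - a) / 2" by (simp_all add: abs_le_iff)
    have tt: "\<bar>t\<bar> \<le> (b - a) / 2" using wt(3) ab(3) by simp
    from ab2 tt have "a \<le> t" by (simp add: abs_le_iff field_simps)
    moreover from ab2 tt have "t \<le> b" by (simp add: abs_le_iff field_simps)
    ultimately have "a \<le> t" "t \<le> b" by auto
    then show "p \<in> K" using ab(2) wt(1) by auto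
  qed
  show ?thesis
  proof (intro conjI impI)
    show "layering K \<le> layering (steiner u K)" by (rule le)
    assume int: "interior K \<noteq> {}"
    show "layering (steiner u K) = layering K \<longleftrightarrow> steiner u K = K"
    proof
      assume E: "layering (steiner u K) = layering K"
      have "K \<subseteq> steiner u K" by (rule K_sub[OF int E])
      then show "steiner u K = K" using S_sub by blast
    qed simp
  qed
qed

end
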